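(* Let $\psi$ be a neighbor function with associated distance parameters $\sigma_1,\dots,\sigma_m$, let $\mu>0$, and let $Q_{\langle G,A_i\rangle}$ be a group-by sum query over confidential attribute $A_i$. Then the neighbor mechanism $M_\psi$, defined by $M_\psi(D)=\psi\big(Q_{\langle G,A_i\rangle}(D)\big)+N\big(\mathbf{0},\tfrac{\sigma_i^2}{\mu^2}\mathbf{I}\big)$ ($\psi$ applied to each entry of the query answer, and independent Gaussian noise of variance $\sigma_i^2/\mu^2$ added to each entry), satisfies $\mu$-Gaussian Establishment DP with neighbor function $\psi$ and distance parameters $\sigma_1,\dots,\sigma_m$.
   Context: A neighbor function is a function $\psi:\mathbb{R}_{\geq 0}\to\mathbb{R}$ that is strictly increasing, continuous, concave, and such that $x\mapsto\psi(e^{x})$ is convex. An establishment record is a tuple $r=(a_1,\dots,a_p,c_1,\dots,c_m)$ of public attribute values $a_1,\dots,a_p$ (of attributes $P_1,\dots,P_p$) and nonnegative real confidential attribute values $c_1,\dots,c_m$ (of attributes $A_1,\dots,A_m$); write $r[A_j]=c_j$. A dataset is a finite collection of records, one per establishment. Given nonnegative distance parameters $\sigma_1,\dots,\sigma_m$, a record $r$ is $\psi$-close to $r'$ if their public attribute values coincide and $|\psi(r[A_j])-\psi(r'[A_j])|\leq\sigma_j$ for all $j=1,\dots,m$. Datasets $D_1,D_2$ are $\psi$-neighbors if $D_1$ is obtained from $D_2$ by replacing one record $r$ with a record $r'$ that is $\psi$-close to $r$. A randomized mechanism $M$ satisfies $\mu$-Gaussian Establishment DP (with $\psi$ and $\sigma_1,\dots,\sigma_m$)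 if for all pairs of $\psi$-neighbors $D_1,D_2$ and all (measurable) sets $S$, $\Phi^{-1}(P(M(D_2)\in S))\leq\Phi^{-1}(P(M(D_1)\in S))+\mu$, where $\Phi$ is the standard normal CDF. A group-by sum query $Q_{\langle G,A_i\rangle}$ is given by a function $G$ of a record's public attribute values into a finite set of groups; its answer is the vector, indexed by the groups $g$, whose entry for $g$ is $\sum_{r\in D:\,G(r)=g} r[A_i]$. *)

theory Defs
  imports "HOL-Probability.Probability"
begin

definition neighbor_function :: "(real \<Rightarrow> real) \<Rightarrow> bool" where
  "neighbor_function \<psi> \<longleftrightarrow>
     strict_mono_on {0..} \<psi> \<and> continuous_on {0..} \<psi> \<and>
     concave_on {0..} \<psi> \<and> convex_on UNIV (\<lambda>x. \<psi> (exp x))"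

text \<open>A record is a pair (public attribute values, confidential attribute values);
  the confidential attributes A_1..A_m are represented by indices 0..m-1 of a function
  nat => real.\<close>

type_synonym 'p erecord = "'p \<times> (nat \<Rightarrow> real)"
type_synonym 'p dataset = "'p erecord list"

definition valid_record :: "nat \<Rightarrow> 'p erecord \<Rightarrow> bool" where
  "valid_record m r \<longleftrightarrow> (\<forall>j<m. snd r j \<ge> 0)"

definition valid_dataset :: "nat \<Rightarrow> 'p dataset \<Rightarrow> bool" where
  "valid_dataset m D \<longleftrightarrow> (\<forall>r\<in>set D. valid_record m r)"

definition psi_close ::
  "(real \<Rightarrow> real) \<Rightarrow> nat \<Rightarrow> (nat \<Rightarrow> real) \<Rightarrow> 'p erecord \<Rightarrow> 'p erecord \<Rightarrow> bool" where
  "psi_close \<psi> m \<sigma> r r' \<longleftrightarrow>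
     fst r = fst r' \<and> (\<forall>j<m. \<bar>\<psi> (snd r j) - \<psi> (snd r' j)\<bar> \<le> \<sigma> j)"

definition psi_neighbors ::
  "(real \<Rightarrow> real) \<Rightarrow> nat \<Rightarrow> (nat \<Rightarrow> real) \<Rightarrow> 'p dataset \<Rightarrow> 'p dataset \<Rightarrow> bool" where
  "psi_neighbors \<psi> m \<sigma> D1 D2 \<longleftrightarrow>
     (\<exists>k r'. k < length D2 \<and> psi_close \<psi> m \<sigma> (D2 ! k) r' \<and> D1 = D2[k := r'])"

definition groupby_sum :: "('p \<Rightarrow> 'g) \<Rightarrow> nat \<Rightarrow> 'p dataset \<Rightarrow> 'g \<Rightarrow> real" where
  "groupby_sum G i D = (\<lambda>g. sum_list (map (\<lambda>r. snd r i) (filter (\<lambda>r. G (fst r) = g) D)))"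

definition std_normal :: "real measure" where
  "std_normal = density lborel std_normal_density"

definition Phi :: "real \<Rightarrow> real" where
  "Phi x = measure std_normal {..x}"

definition Phi_inv :: "real \<Rightarrow> ereal" where
  "Phi_inv p = (if p \<le> 0 then -\<infinity> else if p \<ge> 1 then \<infinity> else ereal (THE x. Phi x = p))"

definition gaussian_establishment_dp ::
  "real \<Rightarrow> (real \<Rightarrow> real) \<Rightarrow> nat \<Rightarrow> (nat \<Rightarrow> real) \<Rightarrow> ('p dataset \<Rightarrow> 'o measure) \<Rightarrow> bool" where
  "gaussian_establishment_dp \<mu> \<psi> m \<sigma> M \<longleftrightarrow>
     (\<forall>D1 D2. valid_dataset m D1 \<longrightarrow> valid_dataset m D2 \<longrightarrow> psi_neighbors \<psi> m \<sigma> D1 D2 \<longrightarrow>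
        (\<forall>S \<in> sets (M D1). S \<in> sets (M D2) \<longrightarrow>
           Phi_inv (measure (M D2) S) \<le> Phi_inv (measure (M D1) S) + ereal \<mu>))"

text \<open>psi applied entrywise to the answer, plus independent N(0, s^2) noise per entry,
  realised as the image of a vector of iid standard normals Z under z |-> a + s z
  (this also covers s = 0, a point mass).\<close>
definition gaussian_vector :: "('g::finite \<Rightarrow> real) \<Rightarrow> real \<Rightarrow> ('g \<Rightarrow> real) measure" where
  "gaussian_vector a s =
     distr (PiM UNIV (\<lambda>_. std_normal)) (PiM UNIV (\<lambda>_. borel)) (\<lambda>z g. a g + s * z g)"

definition neighbor_mechanism ::
  "(real \<Rightarrow> real) \<Rightarrow> (nat \<Rightarrow> real) \<Rightarrow> real \<Rightarrow> ('p \<Rightarrow> 'g::finite) \<Rightarrow> nat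
     \<Rightarrow> 'p dataset \<Rightarrow> ('g \<Rightarrow> real) measure" where
  "neighbor_mechanism \<psi> \<sigma> \<mu> G i D =
     gaussian_vector (\<lambda>g. \<psi> (groupby_sum G i D g)) (\<sigma> i / \<mu>)"

end

theory Submission
  imports Defs
begin

lemma std_normal_prob: "prob_space std_normal"
  unfolding std_normal_def by (rule prob_space_normal_density) auto

lemma sets_std_normal[simp, measurable_cong]: "sets std_normal = sets borel"
  unfolding std_normal_def by simp

lemma space_std_normal[simp]: "space std_normal = UNIV"
  unfolding std_normal_def by simp

lemma real_distribution_std_normal: "real_distribution std_normal"
  unfolding real_distribution_def real_distribution_axioms_def
  using std_normal_prob by simp

lemma nn_integral_std_normal:
  assumes [measurable]: "f \<in> borel_measurable borel"
  shows "(\<integral>\<^sup>+x. f x \<partial>std_normal) = (\<integral>\<^sup>+x. ennreal (std_normal_density x) * f x \<partial>lborel)"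
  unfolding std_normal_def by (subst nn_integral_density) auto

definition Lr :: "real \<Rightarrow> real \<Rightarrow> real" where
  "Lr d x = exp (d * x - d\<^sup>2 / 2)"

lemma Lr_measurable[measurable]: "Lr d \<in> borel_measurable borel"
  unfolding Lr_def by measurable

lemma std_normal_density_shift:
  "std_normal_density (y - d) = std_normal_density y * Lr d y"
proof -
  have "- (y - d)\<^sup>2 / 2 = - y\<^sup>2 / 2 + (d * y - d\<^sup>2 / 2)"
    by (simp add: power2_eq_square field_simps)
  then show ?thesis
    unfolding std_normal_density_def Lr_def by (simp add: exp_add[symmetric])
qed

lemma nn_integral_std_normal_shift:
  assumes [measurable]: "f \<in> borel_measurable borel"
  shows "(\<integral>\<^sup>+x. f (x + d) \<partial>std_normal) = (\<integral>\<^sup>+x. f x * ennreal (Lr d x) \<partial>std_normal)"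
proof -
  have "(\<integral>\<^sup>+x. f (x + d) \<partial>std_normal) = (\<integral>\<^sup>+x. ennreal (std_normal_density x) * f (x + d) \<partial>lborel)"
    by (rule nn_integral_std_normal) measurable
  also have "\<dots> = (\<integral>\<^sup>+x. (\<lambda>y. ennreal (std_normal_density (y - d)) * f y) (d + x) \<partial>lborel)"
    by (simp add: add.commute)
  also have "\<dots> = (\<integral>\<^sup>+y. ennreal (std_normal_density (y - d)) * f y \<partial>distr lborel borel ((+) d))"
    by (subst nn_integral_distr) auto
  also have "\<dots> = (\<integral>\<^sup>+y. ennreal (std_normal_density (y - d)) * f y \<partial>lborel)"
    by (simp add: lborel_distr_plus)
  also have "\<dots> = (\<integral>\<^sup>+y. ennreal (std_normal_density y) * (f y * ennreal (Lr d y)) \<partial>lborel)"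
    by (intro nn_integral_cong)
       (simp add: std_normal_density_shift ennreal_mult' Lr_def mult_ac)
  also have "\<dots> = (\<integral>\<^sup>+x. f x * ennreal (Lr d x) \<partial>std_normal)"
    by (rule nn_integral_std_normal[symmetric]) measurable
  finally show ?thesis .
qed

lemma nn_integral_std_normal_reflect:
  assumes [measurable]: "f \<in> borel_measurable borel"
  shows "(\<integral>\<^sup>+x. f (- x) \<partial>std_normal) = (\<integral>\<^sup>+x. f x \<partial>std_normal)"
proof -
  have "(\<integral>\<^sup>+x. f (- x) \<partial>std_normal) = (\<integral>\<^sup>+x. ennreal (std_normal_density x) * f (- x) \<partial>lborel)"
    by (rule nn_integral_std_normal) measurable
  also have "\<dots> = (\<integral>\<^sup>+x. (\<lambda>y. ennreal (std_normal_density y) * f y) (- x) \<partial>lborel)"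
    by (simp add: std_normal_density_def)
  also have "\<dots> = (\<integral>\<^sup>+y. ennreal (std_normal_density y) * f y \<partial>distr lborel borel uminus)"
    by (subst nn_integral_distr) auto
  also have "\<dots> = (\<integral>\<^sup>+x. f x \<partial>std_normal)"
    by (simp add: lborel_distr_uminus nn_integral_std_normal)
  finally show ?thesis .
qed

interpretation SN: real_distribution std_normal
  by (rule real_distribution_std_normal)

lemma Phi_cdf: "Phi = cdf std_normal"
  by (simp add: fun_eq_iff Phi_def cdf_def2)

lemma emeasure_std_normal:
  assumes "A \<in> sets borel"
  shows "emeasure std_normal A = (\<integral>\<^sup>+x. ennreal (std_normal_density x) * indicator A x \<partial>lborel)"
  unfolding std_normal_def using assms by (subst emeasure_density) auto

lemma std_normal_singleton: "measure std_normal {x} = 0"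
proof -
  have "emeasure std_normal {x} = (\<integral>\<^sup>+z. ennreal (std_normal_density z) * indicator {x} z \<partial>lborel)"
    by (rule emeasure_std_normal) simp
  also have "\<dots> = 0"
    by (intro nn_integral_null_set null_setsI) auto
  finally show ?thesis by (simp add: measure_def)
qed

lemma isCont_Phi: "isCont Phi x"
  unfolding Phi_cdf using SN.isCont_cdf std_normal_singleton by simp

lemma continuous_on_Phi: "continuous_on A Phi"
  using isCont_Phi by (simp add: continuous_at_imp_continuous_on)

lemma Phi_strict_mono:
  assumes "x < y" shows "Phi x < Phi y"
proof -
  have d: "Phi y - Phi x = measure std_normal {x<..y}"
    unfolding Phi_cdf using assms by (simp add: SN.cdf_diff_eq)
  have pos: "std_normal_density z \<noteq> 0" for z
    using normal_density_pos[of 1 0 z] by simp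
  have "emeasure std_normal {x<..y} \<noteq> 0"
  proof
    assume "emeasure std_normal {x<..y} = 0"
    then have "(\<integral>\<^sup>+z. ennreal (std_normal_density z) * indicator {x<..y} z \<partial>lborel) = 0"
      using emeasure_std_normal[of "{x<..y}"] by simp
    then have "AE z in lborel. ennreal (std_normal_density z) * indicator {x<..y} z = 0"
      by (subst (asm) nn_integral_0_iff_AE) auto
    then have "AE z in lborel. z \<notin> {x<..y}"
      by (rule eventually_mono) (auto simp: indicator_def pos)
    then have "emeasure lborel {x<..y} = 0"
      by (subst (asm) AE_iff_measurable[of "{x<..y}"]) auto
    with assms show False by simp
  qed
  then have "measure std_normal {x<..y} > 0"
    using SN.emeasure_eq_measure by (simp add: zero_less_measure_iff)
  with d show ?thesis by simp
qed

lemma Phi_le_iff: "Phi x \<le> Phi y \<longleftrightarrow> x \<le> y"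
proof
  assume "Phi x \<le> Phi y" then show "x \<le> y"
    using Phi_strict_mono[of y x] by (cases "y < x") auto
next
  assume "x \<le> y" then show "Phi x \<le> Phi y"
    using Phi_strict_mono[of x y] by (cases "x = y") auto
qed

lemma Phi_pos: "0 < Phi x"
  using Phi_strict_mono[of "x - 1" x] SN.cdf_nonneg[of "x - 1"] unfolding Phi_cdf by simp

lemma Phi_less_1: "Phi x < 1"
  using Phi_strict_mono[of x "x + 1"] SN.cdf_bounded_prob[of "x + 1"] unfolding Phi_cdf by simp

lemma Phi_surj:
  assumes "0 < p" "p < 1" shows "\<exists>x. Phi x = p"
proof -
  have "eventually (\<lambda>x. Phi x < p) at_bot"
    using order_tendstoD(2)[OF SN.cdf_lim_at_bot, of p] assms unfolding Phi_cdf by simp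
  then obtain a where a: "Phi a < p"
    by (auto simp: eventually_at_bot_linorder)
  have "eventually (\<lambda>x. Phi x > p) at_top"
    using order_tendstoD(1)[OF SN.cdf_lim_at_top_prob, of p] assms unfolding Phi_cdf by simp
  then obtain b where b: "Phi b > p"
    by (auto simp: eventually_at_top_linorder)
  have "a \<le> b" using a b Phi_le_iff[of b a] by linarith
  from IVT'[of Phi a p b, OF _ _ this continuous_on_Phi] a b show ?thesis by auto
qed

lemma Phi_inv_eq:
  assumes "Phi x = p" shows "Phi_inv p = ereal x"
proof -
  have "0 < p" "p < 1" using assms Phi_pos Phi_less_1 by auto
  moreover have "(THE x. Phi x = p) = x"
  proof (rule the_equality)
    show "Phi x = p" by (rule assms)
    fix y assume "Phi y = p"
    then have "Phi y \<le> Phi x" "Phi x \<le> Phi y" using assms by simp_all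
    then show "y = x" unfolding Phi_le_iff by simp
  qed
  ultimately show ?thesis unfolding Phi_inv_def by simp
qed

lemma Phi_inv_le:
  assumes "0 < q" "q < 1" "q \<le> Phi y" shows "Phi_inv q \<le> ereal y"
proof -
  obtain x where x: "Phi x = q" using Phi_surj assms by blast
  then have "x \<le> y" using Phi_le_iff[of x y] assms(3) by simp
  with Phi_inv_eq[OF x] show ?thesis by simp
qed

definition NN :: "('g::finite \<Rightarrow> real) measure" where
  "NN = PiM UNIV (\<lambda>_. std_normal)"

definition shiftv :: "'g \<Rightarrow> real \<Rightarrow> ('g \<Rightarrow> real) \<Rightarrow> ('g \<Rightarrow> real)" where
  "shiftv g0 d z = (\<lambda>g. z g + (if g = g0 then d else 0))"

lemma fpps: "finite_product_prob_space (\<lambda>_. std_normal) (UNIV :: 'g::finite set)"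
  unfolding finite_product_prob_space_def finite_product_sigma_finite_def
    finite_product_sigma_finite_axioms_def product_prob_space_def product_prob_space_axioms_def
    product_sigma_finite_def
  using std_normal_prob prob_space_imp_sigma_finite by auto

lemma sets_NN: "sets (NN :: ('g::finite \<Rightarrow> real) measure) = sets (PiM UNIV (\<lambda>_::'g. borel))"
  unfolding NN_def by (intro sets_PiM_cong) auto

lemma space_NN[simp]: "space (NN :: ('g::finite \<Rightarrow> real) measure) = UNIV"
  unfolding NN_def by (simp add: space_PiM)

lemma prob_NN: "prob_space (NN :: ('g::finite \<Rightarrow> real) measure)"
proof -
  interpret finite_product_prob_space "\<lambda>_. std_normal" "UNIV :: 'g set" by (rule fpps)
  show ?thesis unfolding NN_def by (rule prob_space_axioms)
qed

lemma shiftv_measurable: "shiftv g0 d \<in> measurable (NN :: ('g::finite \<Rightarrow> real) measure) NN"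
  unfolding NN_def
proof (rule measurable_PiM_single')
  fix i :: 'g
  show "(\<lambda>z. shiftv g0 d z i) \<in> measurable (PiM UNIV (\<lambda>_. std_normal)) std_normal"
    unfolding shiftv_def
    by (subst measurable_cong_sets[OF refl sets_std_normal]) measurable
qed (auto simp: space_PiM)

lemma indicator_PiE_prod:
  "indicator (Pi\<^sub>E (UNIV :: 'g::finite set) A) z = (\<Prod>i\<in>UNIV. indicator (A i) (z i) :: ennreal)"
proof (cases "\<forall>i. z i \<in> A i")
  case True then show ?thesis by (simp add: indicator_def PiE_iff)
next
  case False
  then obtain i where "z i \<notin> A i" by auto
  then show ?thesis by (auto simp: indicator_def PiE_iff prod_zero_iff)
qed

lemma NN_prod:
  fixes f :: "'g::finite \<Rightarrow> real \<Rightarrow> ennreal"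
  assumes "\<And>i. f i \<in> borel_measurable borel"
  shows "(\<integral>\<^sup>+z. (\<Prod>i\<in>UNIV. f i (z i)) \<partial>(NN :: ('g \<Rightarrow> real) measure)) = (\<Prod>i\<in>UNIV. integral\<^sup>N std_normal (f i))"
proof -
  interpret finite_product_prob_space "\<lambda>_. std_normal" "UNIV :: 'g set" by (rule fpps)
  show ?thesis unfolding NN_def
  proof (rule product_nn_integral_prod)
    fix i show "f i \<in> borel_measurable std_normal"
      using assms[of i] by (simp add: measurable_cong_sets[OF sets_std_normal refl])
  qed simp
qed

lemma NN_marginal:
  fixes f :: "real \<Rightarrow> ennreal" and g0 :: "'g::finite"
  assumes [measurable]: "f \<in> borel_measurable borel"
  shows "(\<integral>\<^sup>+z. f (z g0) \<partial>(NN :: ('g \<Rightarrow> real) measure)) = integral\<^sup>N std_normal f"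
proof -
  define h where "h = (\<lambda>i x. if i = g0 then f x else 1)"
  have "(\<integral>\<^sup>+z. f (z g0) \<partial>(NN :: ('g \<Rightarrow> real) measure)) = (\<integral>\<^sup>+z. (\<Prod>i\<in>UNIV. h i (z i)) \<partial>NN)"
    by (intro nn_integral_cong) (simp add: h_def)
  also have "\<dots> = (\<Prod>i\<in>UNIV. integral\<^sup>N std_normal (h i))"
    by (rule NN_prod) (simp add: h_def)
  also have "\<dots> = (\<Prod>i\<in>UNIV. if i = g0 then integral\<^sup>N std_normal f else 1)"
  proof (intro prod.cong refl)
    fix i show "integral\<^sup>N std_normal (h i) = (if i = g0 then integral\<^sup>N std_normal f else 1)"
    proof (cases "i = g0")
      case True
      then have "h i = f" by (simp add: h_def fun_eq_iff)
      with True show ?thesis by simp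
    next
      case False
      then have "h i = (\<lambda>_. 1)" by (simp add: h_def fun_eq_iff)
      with False show ?thesis using prob_space.emeasure_space_1[OF std_normal_prob] by simp
    qed
  qed
  also have "\<dots> = integral\<^sup>N std_normal f"
    by simp
  finally show ?thesis .
qed

lemma distr_shiftv:
  fixes g0 :: "'g::finite"
  shows "distr NN NN (shiftv g0 d) = density NN (\<lambda>z. ennreal (Lr d (z g0)))"
proof (rule measure_eqI_PiM_finite[where I=UNIV and M="\<lambda>_. std_normal" and A="\<lambda>_. space NN"])
  show "sets (distr NN NN (shiftv g0 d)) = sets (PiM UNIV (\<lambda>_::'g. std_normal))"
    by (simp add: NN_def)
  show "sets (density NN (\<lambda>z. ennreal (Lr d (z g0)))) = sets (PiM UNIV (\<lambda>_::'g. std_normal))"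
    by (simp add: NN_def)
  show "range (\<lambda>_. space NN) \<subseteq> prod_algebra UNIV (\<lambda>_::'g. std_normal)"
    using prod_algebraI_finite[of UNIV "\<lambda>_. UNIV" "\<lambda>_::'g. std_normal"] by (auto simp: PiE_UNIV_domain)
  show "(\<Union>i::nat. space NN) = space (PiM UNIV (\<lambda>_::'g. std_normal))"
    by (simp add: NN_def)
  have one: "emeasure (NN :: ('g \<Rightarrow> real) measure) (space NN) = 1"
    by (rule prob_space.emeasure_space_1[OF prob_NN])
  have "emeasure (distr NN NN (shiftv g0 d)) (space NN) = emeasure (NN :: ('g \<Rightarrow> real) measure) (space NN)"
    using shiftv_measurable sets.top[of NN] by (subst emeasure_distr) auto
  also have "\<dots> = 1" by (rule one)
  finally show "emeasure (distr NN NN (shiftv g0 d)) (space NN) \<noteq> \<infinity>" for i :: nat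
    by simp
  fix A :: "'g \<Rightarrow> real set"
  assume A: "\<And>i. i \<in> UNIV \<Longrightarrow> A i \<in> sets std_normal"
  then have Am[measurable]: "A i \<in> sets borel" for i by simp
  define f1 where "f1 = (\<lambda>i x. indicator (A i) (x + (if i = g0 then d else 0)) :: ennreal)"
  define f2 where "f2 = (\<lambda>i x. indicator (A i) x * (if i = g0 then ennreal (Lr d x) else 1) :: ennreal)"
  have PA: "Pi\<^sub>E UNIV A \<in> sets (NN :: ('g \<Rightarrow> real) measure)"
    unfolding sets_NN by (rule sets_PiM_I_finite) auto
  have "emeasure (distr NN NN (shiftv g0 d)) (Pi\<^sub>E UNIV A)
      = (\<integral>\<^sup>+z. indicator (Pi\<^sub>E UNIV A) z \<partial>distr NN NN (shiftv g0 d))"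
    using PA by simp
  also have "\<dots> = (\<integral>\<^sup>+z. indicator (Pi\<^sub>E UNIV A) (shiftv g0 d z) \<partial>NN)"
    using PA shiftv_measurable by (subst nn_integral_distr) auto
  also have "\<dots> = (\<integral>\<^sup>+z. (\<Prod>i\<in>UNIV. f1 i (z i)) \<partial>NN)"
    by (intro nn_integral_cong) (simp add: indicator_PiE_prod f1_def shiftv_def)
  also have "\<dots> = (\<Prod>i\<in>UNIV. integral\<^sup>N std_normal (f1 i))"
    by (rule NN_prod) (simp add: f1_def)
  also have "\<dots> = (\<Prod>i\<in>UNIV. integral\<^sup>N std_normal (f2 i))"
  proof (intro prod.cong refl)
    fix i assume "i \<in> (UNIV :: 'g set)"
    show "integral\<^sup>N std_normal (f1 i) = integral\<^sup>N std_normal (f2 i)"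
    proof (cases "i = g0")
      case True
      then have "f1 i = (\<lambda>x. indicator (A g0) (x + d))" "f2 i = (\<lambda>x. indicator (A g0) x * ennreal (Lr d x))"
        by (simp_all add: f1_def f2_def)
      then show ?thesis by (simp add: nn_integral_std_normal_shift)
    next
      case False
      then have "f1 i = f2 i" by (simp add: f1_def f2_def fun_eq_iff)
      then show ?thesis by simp
    qed
  qed
  also have "\<dots> = (\<integral>\<^sup>+z. (\<Prod>i\<in>UNIV. f2 i (z i)) \<partial>NN)"
    by (rule NN_prod[symmetric]) (simp add: f2_def)
  also have "\<dots> = (\<integral>\<^sup>+z. ennreal (Lr d (z g0)) * indicator (Pi\<^sub>E UNIV A) z \<partial>NN)"
  proof (intro nn_integral_cong)
    fix z :: "'g \<Rightarrow> real"
    have "(\<Prod>i\<in>UNIV. f2 i (z i)) = (\<Prod>i\<in>UNIV. indicator (A i) (z i)) * (\<Prod>i\<in>UNIV. if i = g0 then ennreal (Lr d (z i)) else 1)"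
      unfolding f2_def by (rule prod.distrib)
    also have "\<dots> = ennreal (Lr d (z g0)) * indicator (Pi\<^sub>E UNIV A) z"
      by (simp add: indicator_PiE_prod mult.commute)
    finally show "(\<Prod>i\<in>UNIV. f2 i (z i)) = ennreal (Lr d (z g0)) * indicator (Pi\<^sub>E UNIV A) z" .
  qed
  also have "\<dots> = emeasure (density NN (\<lambda>z. ennreal (Lr d (z g0)))) (Pi\<^sub>E UNIV A)"
    using PA by (subst emeasure_density) (auto simp: NN_def)
  finally show "emeasure (distr NN NN (shiftv g0 d)) (Pi\<^sub>E UNIV A)
      = emeasure (density NN (\<lambda>z. ennreal (Lr d (z g0)))) (Pi\<^sub>E UNIV A)" .
qed (simp)

lemma Lr_mono: "d * x \<le> d * y \<Longrightarrow> Lr d x \<le> Lr d y"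
  unfolding Lr_def by simp

lemma Lr_nonneg: "0 \<le> Lr d x"
  unfolding Lr_def by simp

lemma std_le: "(\<integral>\<^sup>+x. indicator {..a} x \<partial>std_normal) = ennreal (Phi a)"
  using SN.emeasure_eq_measure[of "{..a}"] by (simp add: Phi_def)

lemma std_ge: "(\<integral>\<^sup>+x. indicator {a..} x \<partial>std_normal) = ennreal (Phi (- a))"
proof -
  have "(\<integral>\<^sup>+x. indicator {a..} x \<partial>std_normal) = (\<integral>\<^sup>+x. indicator {a..} (- x) \<partial>std_normal)"
    by (rule nn_integral_std_normal_reflect[symmetric]) simp
  also have "\<dots> = (\<integral>\<^sup>+x. indicator {..- a} x \<partial>std_normal)"
    by (intro nn_integral_cong) (auto simp: indicator_def)
  finally show ?thesis by (simp add: std_le)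
qed

lemma F_measurable[measurable]:
  "(\<lambda>z. ennreal (Lr d (z g0))) \<in> borel_measurable (NN :: ('g::finite \<Rightarrow> real) measure)"
  unfolding NN_def by measurable

lemma shifted_measure:
  fixes g0 :: "'g::finite"
  assumes T: "T \<in> sets (NN :: ('g \<Rightarrow> real) measure)"
  shows "emeasure NN {z \<in> space NN. shiftv g0 d z \<in> T} = (\<integral>\<^sup>+z. ennreal (Lr d (z g0)) * indicator T z \<partial>NN)"
proof -
  have eq: "{z \<in> space NN. shiftv g0 d z \<in> T} = shiftv g0 d -` T \<inter> space (NN :: ('g \<Rightarrow> real) measure)"
    by auto
  have "emeasure NN {z \<in> space NN. shiftv g0 d z \<in> T} = emeasure (distr NN NN (shiftv g0 d)) T"
    unfolding eq using T shiftv_measurable by (subst emeasure_distr) auto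
  also have "\<dots> = emeasure (density NN (\<lambda>z. ennreal (Lr d (z g0)))) T"
    by (simp add: distr_shiftv)
  also have "\<dots> = (\<integral>\<^sup>+z. ennreal (Lr d (z g0)) * indicator T z \<partial>NN)"
    using T by (subst emeasure_density) auto
  finally show ?thesis .
qed

lemma np_core:
  fixes g0 :: "'g::finite"
  assumes T: "T \<in> sets (NN :: ('g \<Rightarrow> real) measure)" and d: "d \<noteq> 0"
    and u: "Phi u = measure NN T"
  shows "measure NN {z \<in> space NN. shiftv g0 d z \<in> T} \<le> Phi (u + \<bar>d\<bar>)"
proof -
  interpret P: prob_space "NN :: ('g \<Rightarrow> real) measure" by (rule prob_NN)
  define a where "a = (if d > 0 then -u else u)"
  define B1 where "B1 = (if d > 0 then {a..} else {..a})"
  define B where "B = {z :: 'g \<Rightarrow> real. z g0 \<in> B1}"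
  define c where "c = Lr d a"
  define F where "F z = ennreal (Lr d (z g0))" for z :: "'g \<Rightarrow> real"
  have B1m[measurable]: "B1 \<in> sets borel" by (simp add: B1_def)
  have Fm[measurable]: "F \<in> borel_measurable NN" unfolding F_def by measurable
  have iB: "indicator B z = (indicator B1 (z g0) :: ennreal)" for z
    by (simp add: B_def indicator_def)
  have Bm: "B \<in> sets NN"
  proof -
    have "{z \<in> space NN. z g0 \<in> B1} \<in> sets (NN :: ('g \<Rightarrow> real) measure)"
      unfolding NN_def by measurable
    then show ?thesis by (simp add: B_def)
  qed
  have inB: "c \<le> Lr d x" if "x \<in> B1" for x
  proof (cases "d > 0")
    case True
    with that show ?thesis unfolding c_def B1_def
      by (intro Lr_mono) (simp add: mult_left_mono)
  next
    case False
    with d that show ?thesis unfolding c_def B1_def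
      by (intro Lr_mono) (simp add: mult_left_mono_neg)
  qed
  have notB: "Lr d x \<le> c" if "x \<notin> B1" for x
  proof (cases "d > 0")
    case True
    with that show ?thesis unfolding c_def B1_def
      by (intro Lr_mono) (simp add: mult_left_mono)
  next
    case False
    with d that show ?thesis unfolding c_def B1_def
      by (intro Lr_mono) (simp add: mult_left_mono_neg)
  qed
  have c0: "0 \<le> c" unfolding c_def by (rule Lr_nonneg)
  have pw: "F z * indicator T z + ennreal c * indicator B z \<le> F z * indicator B z + ennreal c * indicator T z" for z
    by (cases "z \<in> T"; cases "z g0 \<in> B1")
       (auto simp: indicator_def F_def B_def intro!: ennreal_leI inB notB)
  have "(\<integral>\<^sup>+z. F z * indicator T z + ennreal c * indicator B z \<partial>NN)
      \<le> (\<integral>\<^sup>+z. F z * indicator B z + ennreal c * indicator T z \<partial>NN)"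
    by (rule nn_integral_mono) (rule pw)
  also have "(\<integral>\<^sup>+z. F z * indicator B z + ennreal c * indicator T z \<partial>NN)
      = (\<integral>\<^sup>+z. F z * indicator B z \<partial>NN) + ennreal c * emeasure NN T"
    using T Bm by (subst nn_integral_add) (auto simp: nn_integral_cmult_indicator)
  also have "(\<integral>\<^sup>+z. F z * indicator T z + ennreal c * indicator B z \<partial>NN)
      = (\<integral>\<^sup>+z. F z * indicator T z \<partial>NN) + ennreal c * emeasure NN B"
    using T Bm by (subst nn_integral_add) (auto simp: nn_integral_cmult_indicator)
  finally have ineq: "(\<integral>\<^sup>+z. F z * indicator T z \<partial>NN) + ennreal c * emeasure NN B
      \<le> (\<integral>\<^sup>+z. F z * indicator B z \<partial>NN) + ennreal c * emeasure NN T" .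
  have pT: "emeasure NN T = ennreal (Phi u)"
    using u P.emeasure_eq_measure by simp
  have pB: "emeasure NN B = ennreal (Phi u)"
  proof -
    have "emeasure NN B = (\<integral>\<^sup>+z. indicator B z \<partial>NN)" using Bm by simp
    also have "\<dots> = (\<integral>\<^sup>+z. indicator B1 (z g0) \<partial>NN)" by (simp add: iB)
    also have "\<dots> = (\<integral>\<^sup>+x. indicator B1 x \<partial>std_normal)" by (rule NN_marginal) simp
    also have "\<dots> = ennreal (Phi u)"
      using std_le[of u] std_ge[of "- u"] by (simp add: B1_def a_def)
    finally show ?thesis .
  qed
  have QB: "(\<integral>\<^sup>+z. F z * indicator B z \<partial>NN) = ennreal (Phi (u + \<bar>d\<bar>))"
  proof -
    have "(\<integral>\<^sup>+z. F z * indicator B z \<partial>NN) = (\<integral>\<^sup>+z. (\<lambda>x. ennreal (Lr d x) * indicator B1 x) (z g0) \<partial>NN)"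
      by (simp add: iB F_def)
    also have "\<dots> = (\<integral>\<^sup>+x. ennreal (Lr d x) * indicator B1 x \<partial>std_normal)"
      by (rule NN_marginal) simp
    also have "\<dots> = (\<integral>\<^sup>+x. indicator B1 (x + d) \<partial>std_normal)"
      by (subst nn_integral_std_normal_shift) (auto simp: mult.commute)
    also have "\<dots> = ennreal (Phi (u + \<bar>d\<bar>))"
    proof (cases "d > 0")
      case True
      have "(\<integral>\<^sup>+x. indicator B1 (x + d) \<partial>std_normal) = (\<integral>\<^sup>+x. indicator {- u - d..} x \<partial>std_normal)"
        using True by (intro nn_integral_cong) (auto simp: B1_def a_def indicator_def)
      with True show ?thesis by (simp add: std_ge add.commute)
    next
      case False
      have "(\<integral>\<^sup>+x. indicator B1 (x + d) \<partial>std_normal) = (\<integral>\<^sup>+x. indicator {..u - d} x \<partial>std_normal)"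
        using False by (intro nn_integral_cong) (auto simp: B1_def a_def indicator_def)
      with False d show ?thesis by (simp add: std_le)
    qed
    finally show ?thesis .
  qed
  have fin: "ennreal c * ennreal (Phi u) \<noteq> \<infinity>"
    by (simp add: ennreal_mult_eq_top_iff)
  from ineq have "(\<integral>\<^sup>+z. F z * indicator T z \<partial>NN) + ennreal c * ennreal (Phi u)
      \<le> ennreal (Phi (u + \<bar>d\<bar>)) + ennreal c * ennreal (Phi u)"
    by (simp add: pT pB QB)
  with fin have "(\<integral>\<^sup>+z. F z * indicator T z \<partial>NN) \<le> ennreal (Phi (u + \<bar>d\<bar>))"
    by (metis add.commute ennreal_add_left_cancel_le)
  then have "emeasure NN {z \<in> space NN. shiftv g0 d z \<in> T} \<le> ennreal (Phi (u + \<bar>d\<bar>))"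
    using shifted_measure[OF T, of g0 d] by (simp add: F_def)
  then show ?thesis
    using P.emeasure_eq_measure Phi_pos[of "u + \<bar>d\<bar>"] by (simp add: ennreal_le_iff)
qed

lemma concave_incr:
  fixes f :: "real \<Rightarrow> real"
  assumes f: "concave_on {0..} f" and x: "0 \<le> x" "x \<le> y" and t: "0 \<le> t"
  shows "f (y + t) - f (x + t) \<le> f y - f x"
proof (cases "t = 0 \<or> x = y")
  case True then show ?thesis by auto
next
  case False
  then have t0: "t > 0" and xy: "x < y" using t x by auto
  define D where "D = y - x + t"
  have D0: "D > 0" using t0 xy by (simp add: D_def)
  define l where "l = t / D"
  define l' where "l' = (y - x) / D"
  have l: "0 \<le> l" "l \<le> 1" using t0 xy D0 by (auto simp: l_def D_def)
  have l': "0 \<le> l'" "l' \<le> 1" using t0 xy D0 by (auto simp: l'_def D_def)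
  have tD: "t + (y - x) = D" by (simp add: D_def)
  have "l + l' = (t + (y - x)) / D" by (simp add: l_def l'_def add_divide_distrib)
  also have "\<dots> = 1" using D0 by (simp add: tD)
  finally have ll: "l + l' = 1" .
  have mem: "x \<in> {0..}" "y + t \<in> {0..}" using x t by auto
  have l'D: "l' * D = y - x" using D0 by (simp add: l'_def)
  have lD: "l * D = t" using D0 by (simp add: l_def)
  have "(1 - l') *\<^sub>R x + l' *\<^sub>R (y + t) = x + l' * D"
    by (simp add: D_def algebra_simps)
  then have e1: "(1 - l') *\<^sub>R x + l' *\<^sub>R (y + t) = y" using l'D by simp
  have "(1 - l) *\<^sub>R x + l *\<^sub>R (y + t) = x + l * D"
    by (simp add: D_def algebra_simps)
  then have e2: "(1 - l) *\<^sub>R x + l *\<^sub>R (y + t) = x + t" using lD by simp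
  have i1: "f y \<ge> (1 - l') * f x + l' * f (y + t)"
    using concave_onD[OF f l' mem] e1 by simp
  have i2: "f (x + t) \<ge> (1 - l) * f x + l * f (y + t)"
    using concave_onD[OF f l mem] e2 by simp
  from i1 i2 ll show ?thesis by (simp add: algebra_simps) (smt (verit) distrib_right mult_cancel_right1)
qed

lemma sum_list_upd_real:
  "k < length xs \<Longrightarrow> sum_list (xs[k := v]) = sum_list xs - xs ! k + (v::real)"
proof (induction xs arbitrary: k)
  case (Cons a xs)
  then show ?case by (cases k) auto
qed simp

lemma groupby_sum_alt:
  "groupby_sum G i D g = sum_list (map (\<lambda>r. if G (fst r) = g then snd r i else 0) D)"
  unfolding groupby_sum_def by (simp add: sum_list_map_filter')

lemma groupby_upd:
  assumes k: "k < length D" and fst: "fst r' = fst (D ! k)"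
  shows "groupby_sum G i (D[k := r']) g = groupby_sum G i D g
     - (if G (fst (D ! k)) = g then snd (D ! k) i else 0) + (if G (fst (D ! k)) = g then snd r' i else 0)"
  unfolding groupby_sum_alt using k fst by (simp add: map_update sum_list_upd_real)

lemma groupby_rest_nonneg:
  assumes k: "k < length D" and v: "valid_dataset m D" and i: "i < m"
  shows "groupby_sum G i D g - (if G (fst (D ! k)) = g then snd (D ! k) i else 0) \<ge> 0"
proof -
  let ?l = "map (\<lambda>r. if G (fst r) = g then snd r i else 0) D"
  have "sum_list (?l[k := 0]) \<ge> 0"
  proof (rule sum_list_nonneg)
    fix x assume "x \<in> set (?l[k := 0])"
    then have "x = 0 \<or> x \<in> set ?l" using set_update_subset_insert by fastforce
    then show "0 \<le> x" using v i by (auto simp: valid_dataset_def valid_record_def)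
  qed
  then show ?thesis using k unfolding groupby_sum_alt by (simp add: sum_list_upd_real)
qed

lemma psi_shift_bound:
  fixes \<psi> :: "real \<Rightarrow> real"
  assumes nf: "neighbor_function \<psi>" and R: "0 \<le> R" and c: "0 \<le> c" "0 \<le> c'"
  shows "\<bar>\<psi> (R + c') - \<psi> (R + c)\<bar> \<le> \<bar>\<psi> c' - \<psi> c\<bar>"
proof -
  have sm: "strict_mono_on {0..} \<psi>" and cc: "concave_on {0..} \<psi>"
    using nf by (auto simp: neighbor_function_def)
  have mono: "\<psi> a \<le> \<psi> b" if "0 \<le> a" "a \<le> b" for a b
  proof (cases "a = b")
    case False
    then have "a < b" using that by simp
    then show ?thesis using strict_mono_onD[OF sm, of a b] that by simp
  qed simp
  show ?thesis
  proof (cases "c \<le> c'")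
    case True
    have "\<psi> (c' + R) - \<psi> (c + R) \<le> \<psi> c' - \<psi> c" by (rule concave_incr[OF cc c(1) True R])
    moreover have "\<psi> (R + c) \<le> \<psi> (R + c')" using True R c by (intro mono) auto
    moreover have "\<psi> c \<le> \<psi> c'" using True c by (intro mono) auto
    ultimately show ?thesis by (simp add: add.commute)
  next
    case False
    then have F: "c' \<le> c" by simp
    have "\<psi> (c + R) - \<psi> (c' + R) \<le> \<psi> c - \<psi> c'" by (rule concave_incr[OF cc c(2) F R])
    moreover have "\<psi> (R + c') \<le> \<psi> (R + c)" using F R c by (intro mono) auto
    moreover have "\<psi> c' \<le> \<psi> c" using F c by (intro mono) auto
    ultimately show ?thesis by (simp add: add.commute)
  qed
qed

lemma gauss_dp:
  fixes g0 :: "'g::finite"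
  assumes T: "T \<in> sets (NN :: ('g \<Rightarrow> real) measure)" and d: "\<bar>d\<bar> \<le> \<mu>"
  shows "Phi_inv (measure NN {z \<in> space NN. shiftv g0 d z \<in> T}) \<le> Phi_inv (measure NN T) + ereal \<mu>"
proof -
  interpret P: prob_space "NN :: ('g \<Rightarrow> real) measure" by (rule prob_NN)
  let ?q = "measure NN {z \<in> space NN. shiftv g0 d z \<in> T}"
  let ?p = "measure NN T"
  have mu: "0 \<le> \<mu>" using d by simp
  consider "?p \<le> 0" | "?p \<ge> 1" | "0 < ?p" "?p < 1" by linarith
  then show ?thesis
  proof cases
    case 1
    then have "?p = 0" using measure_nonneg[of NN T] by linarith
    then have "emeasure NN T = 0" using P.emeasure_eq_measure by simp
    then have "T \<in> null_sets NN" using T by (simp add: null_sets_def)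
    then have "emeasure NN {z \<in> space NN. shiftv g0 d z \<in> T} = 0"
      using shifted_measure[OF T, of g0 d] by (simp add: nn_integral_null_set)
    then have "?q = 0" by (simp add: measure_def)
    then show ?thesis by (simp add: Phi_inv_def)
  next
    case 2
    then show ?thesis by (simp add: Phi_inv_def)
  next
    case 3
    then obtain u where u: "Phi u = ?p" using Phi_surj by blast
    have pu: "Phi_inv ?p = ereal u" by (rule Phi_inv_eq[OF u])
    show ?thesis
    proof (cases "d = 0")
      case True
      have "{z \<in> space NN. shiftv g0 d z \<in> T} = T"
        using True sets.sets_into_space[OF T] by (auto simp: shiftv_def)
      then show ?thesis using pu mu by simp
    next
      case False
      have q: "?q \<le> Phi (u + \<bar>d\<bar>)" by (rule np_core[OF T False u])
      have "?q < 1" using q Phi_less_1[of "u + \<bar>d\<bar>"] by linarith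
      show ?thesis
      proof (cases "?q \<le> 0")
        case True then show ?thesis by (simp add: Phi_inv_def)
      next
        case False
        then have "Phi_inv ?q \<le> ereal (u + \<bar>d\<bar>)"
          using Phi_inv_le[OF _ \<open>?q < 1\<close> q] by simp
        also have "\<dots> \<le> ereal (u + \<mu>)" using d by simp
        finally show ?thesis using pu by simp
      qed
    qed
  qed
qed

lemma aff_meas:
  "(\<lambda>z g. a g + s * z g) \<in> measurable (NN :: ('g::finite \<Rightarrow> real) measure) (PiM UNIV (\<lambda>_. borel))"
  unfolding NN_def
proof (rule measurable_PiM_single')
  fix i :: 'g
  have "(\<lambda>z. z i) \<in> measurable (PiM UNIV (\<lambda>_. std_normal)) borel"
    using measurable_component_singleton[of i UNIV "\<lambda>_. std_normal"]
    by (simp add: measurable_cong_sets[OF refl sets_std_normal])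
  then show "(\<lambda>z. a i + s * z i) \<in> measurable (PiM UNIV (\<lambda>_. std_normal)) borel"
    by measurable
qed (auto simp: space_PiM)

lemma mech_measure:
  fixes a :: "'g::finite \<Rightarrow> real"
  assumes S: "S \<in> sets (PiM UNIV (\<lambda>_::'g. borel))"
  shows "measure (gaussian_vector a s) S = measure NN {z \<in> space NN. (\<lambda>g. a g + s * z g) \<in> S}"
proof -
  have "measure (gaussian_vector a s) S = measure NN ((\<lambda>z g. a g + s * z g) -` S \<inter> space NN)"
    unfolding gaussian_vector_def NN_def[symmetric] by (rule measure_distr[OF aff_meas S])
  also have "(\<lambda>z g. a g + s * z g) -` S \<inter> space NN = {z \<in> space NN. (\<lambda>g. a g + s * z g) \<in> S}"
    by auto
  finally show ?thesis .
qed

lemma ereal_le_add_nonneg: "0 \<le> \<mu> \<Longrightarrow> (x::ereal) \<le> x + ereal \<mu>"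
  by (cases x) auto

theorem theorem6p5:
  fixes \<psi> :: "real \<Rightarrow> real" and m i :: nat and \<sigma> :: "nat \<Rightarrow> real" and \<mu> :: real
    and G :: "'p \<Rightarrow> 'g::finite"
  assumes "neighbor_function \<psi>"
    and "\<forall>j<m. \<sigma> j \<ge> 0"
    and "\<mu> > 0"
    and "i < m"
  shows "gaussian_establishment_dp \<mu> \<psi> m \<sigma> (neighbor_mechanism \<psi> \<sigma> \<mu> G i)"
proof -
  note nf = assms(1)
  have \<sigma>i: "\<sigma> i \<ge> 0" using assms(2,4) by simp
  have \<mu>0: "\<mu> > 0" by (rule assms(3))
  note im = assms(4)
  show ?thesis unfolding gaussian_establishment_dp_def
  proof (intro allI impI ballI)
    fix D1 D2 :: "'p dataset" and S
    assume v1: "valid_dataset m D1" and v2: "valid_dataset m D2"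
      and nb: "psi_neighbors \<psi> m \<sigma> D1 D2"
      and S1: "S \<in> sets (neighbor_mechanism \<psi> \<sigma> \<mu> G i D1)"
      and S2: "S \<in> sets (neighbor_mechanism \<psi> \<sigma> \<mu> G i D2)"
    obtain k r' where k: "k < length D2" and cl: "psi_close \<psi> m \<sigma> (D2 ! k) r'"
      and D1: "D1 = D2[k := r']"
      using nb unfolding psi_neighbors_def by blast
    define r where "r = D2 ! k"
    define g0 where "g0 = G (fst r)"
    have fst: "fst r' = fst r" using cl by (simp add: psi_close_def r_def)
    have cli: "\<bar>\<psi> (snd r i) - \<psi> (snd r' i)\<bar> \<le> \<sigma> i"
      using cl im by (simp add: psi_close_def r_def)
    have "r' \<in> set D1" using k D1 by (simp add: set_update_memI)
    then have c'nn: "snd r' i \<ge> 0" using v1 im by (auto simp: valid_dataset_def valid_record_def)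
    have "r \<in> set D2" using k by (simp add: r_def)
    then have cnn: "snd r i \<ge> 0" using v2 im by (auto simp: valid_dataset_def valid_record_def)
    define R where "R = groupby_sum G i D2 g0 - snd r i"
    have R0: "R \<ge> 0"
      using groupby_rest_nonneg[OF k v2 im, of G g0] by (simp add: R_def r_def g0_def)
    have s2g0: "groupby_sum G i D2 g0 = R + snd r i" by (simp add: R_def)
    have s1g0: "groupby_sum G i D1 g0 = R + snd r' i"
      using groupby_upd[OF k, of r' G i g0] fst by (simp add: D1 R_def r_def g0_def)
    have other: "groupby_sum G i D1 g = groupby_sum G i D2 g" if "g \<noteq> g0" for g
      using groupby_upd[OF k, of r' G i g] fst that by (simp add: D1 r_def g0_def)
    define a1 where "a1 = (\<lambda>g. \<psi> (groupby_sum G i D1 g))"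
    define a2 where "a2 = (\<lambda>g. \<psi> (groupby_sum G i D2 g))"
    have same: "a1 g = a2 g" if "g \<noteq> g0" for g using other[OF that] by (simp add: a1_def a2_def)
    have diff: "\<bar>a2 g0 - a1 g0\<bar> \<le> \<sigma> i"
    proof -
      have "\<bar>a2 g0 - a1 g0\<bar> = \<bar>\<psi> (R + snd r' i) - \<psi> (R + snd r i)\<bar>"
        by (simp add: a1_def a2_def s1g0 s2g0 abs_minus_commute)
      also have "\<dots> \<le> \<bar>\<psi> (snd r' i) - \<psi> (snd r i)\<bar>"
        by (rule psi_shift_bound[OF nf R0 cnn c'nn])
      also have "\<dots> \<le> \<sigma> i" using cli by (simp add: abs_minus_commute)
      finally show ?thesis .
    qed
    define s where "s = \<sigma> i / \<mu>"
    have M1: "neighbor_mechanism \<psi> \<sigma> \<mu> G i D1 = gaussian_vector a1 s"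
      by (simp add: neighbor_mechanism_def a1_def s_def)
    have M2: "neighbor_mechanism \<psi> \<sigma> \<mu> G i D2 = gaussian_vector a2 s"
      by (simp add: neighbor_mechanism_def a2_def s_def)
    have SP: "S \<in> sets (PiM UNIV (\<lambda>_::'g. borel))"
      using S1 by (simp add: M1 gaussian_vector_def)
    show "Phi_inv (measure (neighbor_mechanism \<psi> \<sigma> \<mu> G i D2) S)
        \<le> Phi_inv (measure (neighbor_mechanism \<psi> \<sigma> \<mu> G i D1) S) + ereal \<mu>"
    proof (cases "\<sigma> i = 0")
      case True
      have "a1 = a2"
      proof
        fix g show "a1 g = a2 g"
          using diff same[of g] True by (cases "g = g0") auto
      qed
      then show ?thesis unfolding M1 M2 using \<mu>0 by (simp add: ereal_le_add_nonneg)
    next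
      case False
      then have s0: "s > 0" using \<sigma>i \<mu>0 by (simp add: s_def)
      define T where "T = {z \<in> space NN. (\<lambda>g. a1 g + s * z g) \<in> S}"
      have T: "T \<in> sets (NN :: ('g \<Rightarrow> real) measure)"
      proof -
        have "(\<lambda>z g. a1 g + s * z g) -` S \<inter> space NN \<in> sets (NN :: ('g \<Rightarrow> real) measure)"
          by (rule measurable_sets[OF aff_meas SP])
        moreover have "(\<lambda>z g. a1 g + s * z g) -` S \<inter> space NN = T" by (auto simp: T_def)
        ultimately show ?thesis by simp
      qed
      define \<delta> where "\<delta> = (a2 g0 - a1 g0) / s"
      have \<delta>: "\<bar>\<delta>\<bar> \<le> \<mu>"
      proof -
        have "\<bar>\<delta>\<bar> = \<bar>a2 g0 - a1 g0\<bar> / s" using s0 by (simp add: \<delta>_def)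
        also have "\<dots> \<le> \<sigma> i / s" using diff s0 by (simp add: divide_right_mono)
        also have "\<dots> = \<mu>" using s0 \<mu>0 False by (simp add: s_def)
        finally show ?thesis .
      qed
      have key: "(\<lambda>g. a2 g + s * z g) = (\<lambda>g. a1 g + s * shiftv g0 \<delta> z g)" for z
      proof
        fix g show "a2 g + s * z g = a1 g + s * shiftv g0 \<delta> z g"
        proof (cases "g = g0")
          case True
          have "s * \<delta> = a2 g0 - a1 g0" using s0 by (simp add: \<delta>_def)
          then show ?thesis using True by (simp add: shiftv_def algebra_simps)
        next
          case False
          then show ?thesis using same[OF False] by (simp add: shiftv_def)
        qed
      qed
      have set2: "{z \<in> space NN. (\<lambda>g. a2 g + s * z g) \<in> S} = {z \<in> space NN. shiftv g0 \<delta> z \<in> T}"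
        by (auto simp: T_def key)
      have "Phi_inv (measure (gaussian_vector a2 s) S) = Phi_inv (measure NN {z \<in> space NN. shiftv g0 \<delta> z \<in> T})"
        by (subst mech_measure[OF SP], subst set2, rule refl)
      also have "\<dots> \<le> Phi_inv (measure NN T) + ereal \<mu>"
        by (rule gauss_dp[OF T \<delta>])
      also have "measure NN T = measure (gaussian_vector a1 s) S"
        by (simp add: mech_measure[OF SP] T_def)
      finally show ?thesis unfolding M1 M2 .
    qed
  qed
qed


end
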